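(* Let $n\ge 1$, $r\ge 1$, and $A,B\in U(2^n)$. If the $(n+1)$-qubit unitary $$D=\ket{0}\!\bra{0}\otimes A+\ket{1}\!\bra{1}\otimes B$$ lies in $\mathcal{C}_r^{(n+1)}$, then both $A$ and $B$ lie in $\mathcal{C}_r^{(n)}$.
   Context: The $n$-qubit Pauli group is $\mathcal{P}_n=\{\omega P_1\otimes\cdots\otimes P_n:\ \omega\in\{\pm1,\pm \mathrm{i}\},\ P_j\in\{I,X,Y,Z\}\}$. The $n$-qubit Clifford hierarchy is defined recursively by $\mathcal{C}_1^{(n)}:=\mathcal{P}_n$ and $\mathcal{C}_{k+1}^{(n)}:=\{U\in U(2^n):\ UPU^\dagger\in\mathcal{C}_k^{(n)}\text{ for all }P\in\mathcal{P}_n\}$. In $D$, the first tensor factor is a single qubit (the "control") and the second is the $n$-qubit register. *)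

theory Defs
  imports Complex_Main "Jordan_Normal_Form.Matrix"
begin

definition adj :: "complex mat \<Rightarrow> complex mat" where
  "adj M = mat (dim_col M) (dim_row M) (\<lambda>(i,j). cnj (M $$ (j,i)))"

definition unitary :: "nat \<Rightarrow> complex mat \<Rightarrow> bool" where
  "unitary n U \<longleftrightarrow> U \<in> carrier_mat (2^n) (2^n) \<and> U * adj U = 1\<^sub>m (2^n) \<and> adj U * U = 1\<^sub>m (2^n)"

text \<open>Kronecker (tensor) product; the first factor is the most significant one.\<close>
definition kron :: "complex mat \<Rightarrow> complex mat \<Rightarrow> complex mat" where
  "kron A B = mat (dim_row A * dim_row B) (dim_col A * dim_col B)
     (\<lambda>(i,j). A $$ (i div dim_row B, j div dim_col B) * B $$ (i mod dim_row B, j mod dim_col B))"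

fun kron_list :: "complex mat list \<Rightarrow> complex mat" where
  "kron_list [] = 1\<^sub>m 1"
| "kron_list (P # Ps) = kron P (kron_list Ps)"

definition pauli_I :: "complex mat" where
  "pauli_I = mat_of_rows_list 2 [[1, 0], [0, 1]]"
definition pauli_X :: "complex mat" where
  "pauli_X = mat_of_rows_list 2 [[0, 1], [1, 0]]"
definition pauli_Y :: "complex mat" where
  "pauli_Y = mat_of_rows_list 2 [[0, - \<i>], [\<i>, 0]]"
definition pauli_Z :: "complex mat" where
  "pauli_Z = mat_of_rows_list 2 [[1, 0], [0, -1]]"

definition pauli_group :: "nat \<Rightarrow> complex mat set" where
  "pauli_group n = {w \<cdot>\<^sub>m kron_list Ps | w Ps.
      w \<in> {1, -1, \<i>, -\<i>} \<and> length Ps = n \<and> set Ps \<subseteq> {pauli_I, pauli_X, pauli_Y, pauli_Z}}"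

text \<open>The n-qubit Clifford hierarchy: clifford n k is the k-th level (k \<ge> 1);
  level 0 is unused and set to the empty set.\<close>
fun clifford :: "nat \<Rightarrow> nat \<Rightarrow> complex mat set" where
  "clifford n 0 = {}"
| "clifford n (Suc 0) = pauli_group n"
| "clifford n (Suc (Suc k)) =
     {U. unitary n U \<and> (\<forall>P \<in> pauli_group n. U * P * adj U \<in> clifford n (Suc k))}"

definition proj0 :: "complex mat" where
  "proj0 = mat_of_rows_list 2 [[1, 0], [0, 0]]"
definition proj1 :: "complex mat" where
  "proj1 = mat_of_rows_list 2 [[0, 0], [0, 1]]"

end

theory Submission
  imports Defs
begin

abbreviation fb :: "nat \<Rightarrow> complex mat \<Rightarrow> complex mat \<Rightarrow> complex mat" where
  "fb m X Y \<equiv> four_block_mat X (0\<^sub>m m m) (0\<^sub>m m m) Y"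

lemma dm_lo: "(i::nat) < m \<Longrightarrow> i div m = 0 \<and> i mod m = i" by simp
lemma dm_hi: "m \<le> (i::nat) \<Longrightarrow> i < m + m \<Longrightarrow> i div m = 1 \<and> i mod m = i - m"
proof -
  assume a: "m \<le> i" "i < m + m"
  have "i = 1 * m + (i - m)" "i - m < m" using a by auto
  then show ?thesis by (metis div_mult_self3 mod_mult_self3 div_less mod_less add.commute  less_nat_zero_code plus_nat.add_0 mult_1 not_gr0 a(1) le_add_diff_inverse2 linorder_not_le)
qed

lemma D_eq:
  assumes X: "X \<in> carrier_mat m m" and Y: "Y \<in> carrier_mat m m"
  shows "kron proj0 X + kron proj1 Y = fb m X Y"
proof (rule eq_matI)
  show dr: "dim_row (kron proj0 X + kron proj1 Y) = dim_row (fb m X Y)"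
    using X Y by (simp add: kron_def proj0_def proj1_def mat_of_rows_list_def)
  show "dim_col (kron proj0 X + kron proj1 Y) = dim_col (fb m X Y)"
    using X Y by (simp add: kron_def proj0_def proj1_def mat_of_rows_list_def)
  fix i j assume i: "i < dim_row (fb m X Y)" and j: "j < dim_col (fb m X Y)"
  then have i2: "i < m + m" and j2: "j < m + m" using X Y by auto
  show "(kron proj0 X + kron proj1 Y) $$ (i, j) = fb m X Y $$ (i, j)"
    using X Y i2 j2 dm_lo[of i m] dm_lo[of j m] dm_hi[of m i] dm_hi[of m j]
    by (cases "i < m"; cases "j < m")
       (auto simp: kron_def proj0_def proj1_def mat_of_rows_list_def)
qed

lemma I_kron:
  assumes X: "X \<in> carrier_mat m m"
  shows "kron pauli_I X = fb m X X"
proof (rule eq_matI)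
  show dr: "dim_row (kron pauli_I X) = dim_row (fb m X X)"
    using X by (simp add: kron_def pauli_I_def mat_of_rows_list_def)
  show "dim_col (kron pauli_I X) = dim_col (fb m X X)"
    using X by (simp add: kron_def pauli_I_def mat_of_rows_list_def)
  fix i j assume i: "i < dim_row (fb m X X)" and j: "j < dim_col (fb m X X)"
  then have i2: "i < m + m" and j2: "j < m + m" using X by auto
  show "kron pauli_I X $$ (i, j) = fb m X X $$ (i, j)"
    using X i2 j2 dm_lo[of i m] dm_lo[of j m] dm_hi[of m i] dm_hi[of m j]
    by (cases "i < m"; cases "j < m")
       (auto simp: kron_def pauli_I_def mat_of_rows_list_def)
qed

lemma adj_carrier: "X \<in> carrier_mat a b \<Longrightarrow> adj X \<in> carrier_mat b a"
  by (simp add: adj_def)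

lemma adj_fb:
  assumes X: "X \<in> carrier_mat m m" and Y: "Y \<in> carrier_mat m m"
  shows "adj (fb m X Y) = fb m (adj X) (adj Y)"
  by (rule eq_matI) (use X Y in \<open>auto simp: adj_def\<close>)

lemma fb_inj:
  assumes "X \<in> carrier_mat m m" "Y \<in> carrier_mat m m" "X' \<in> carrier_mat m m" "Y' \<in> carrier_mat m m"
    and eq: "fb m X Y = fb m X' Y'"
  shows "X = X' \<and> Y = Y'"
proof
  show "X = X'"
  proof (rule eq_matI)
    fix i j assume "i < dim_row X'" "j < dim_col X'"
    then have ij: "i < m" "j < m" using assms by auto
    have "fb m X Y $$ (i,j) = fb m X' Y' $$ (i,j)" using eq by simp
    then show "X $$ (i,j) = X' $$ (i,j)" using ij assms(1-4) by simp
  qed (use assms in auto)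
  show "Y = Y'"
  proof (rule eq_matI)
    fix i j assume "i < dim_row Y'" "j < dim_col Y'"
    then have ij: "i < m" "j < m" using assms by auto
    have "fb m X Y $$ (i+m,j+m) = fb m X' Y' $$ (i+m,j+m)" using eq by simp
    then show "Y $$ (i,j) = Y' $$ (i,j)" using ij assms(1-4) by simp
  qed (use assms in auto)
qed

lemma fb_mult:
  assumes "X \<in> carrier_mat m m" "Y \<in> carrier_mat m m" "X' \<in> carrier_mat m m" "Y' \<in> carrier_mat m m"
  shows "fb m X Y * fb m X' Y' = fb m (X * X') (Y * Y')"
  by (subst mult_four_block_mat[of _ m m _ m _ m _ _ m _ m]) (use assms in auto)


lemma paulis_carrier: "P \<in> {pauli_I, pauli_X, pauli_Y, pauli_Z} \<Longrightarrow> P \<in> carrier_mat 2 2"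
  by (auto simp: pauli_I_def pauli_X_def pauli_Y_def pauli_Z_def mat_of_rows_list_def)

lemma kron_carrier: "P \<in> carrier_mat a b \<Longrightarrow> Q \<in> carrier_mat c d \<Longrightarrow> kron P Q \<in> carrier_mat (a*c) (b*d)"
  by (simp add: kron_def)

lemma kron_list_carrier:
  "set Ps \<subseteq> {pauli_I, pauli_X, pauli_Y, pauli_Z} \<Longrightarrow> kron_list Ps \<in> carrier_mat (2^length Ps) (2^length Ps)"
proof (induction Ps)
  case Nil then show ?case by simp
next
  case (Cons P Ps)
  then have "P \<in> carrier_mat 2 2" using paulis_carrier by auto
  with Cons show ?case using kron_carrier by fastforce
qed

lemma lt2: "(a::nat) < 2 \<Longrightarrow> i < m \<Longrightarrow> a*m + i < 2*m"
  by (cases a) auto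

lemma kron_index:
  assumes "P \<in> carrier_mat 2 2" "Q \<in> carrier_mat m m" "i < m" "j < m" "a < 2" "b < 2"
  shows "kron P Q $$ (a*m+i, b*m+j) = P $$ (a,b) * Q $$ (i,j)"
proof -
  have r: "a*m+i < 2*m" "b*m+j < 2*m" using assms lt2 by auto
  show ?thesis using assms r by (simp add: kron_def)
qed

lemma paulis_nz: "P \<in> {pauli_I, pauli_X, pauli_Y, pauli_Z} \<Longrightarrow> \<exists>a b. a < 2 \<and> b < 2 \<and> P $$ (a,b) \<noteq> 0"
proof -
  assume "P \<in> {pauli_I, pauli_X, pauli_Y, pauli_Z}"
  then consider "P = pauli_I" | "P = pauli_X" | "P = pauli_Y" | "P = pauli_Z" by blast
  then show ?thesis
  proof cases
    case 1 then show ?thesis by (intro exI[of _ 0]) (simp add: pauli_I_def mat_of_rows_list_def)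
  next
    case 2 then show ?thesis by (intro exI[of _ 0] exI[of _ 1]) (simp add: pauli_X_def mat_of_rows_list_def)
  next
    case 3 then show ?thesis by (intro exI[of _ 0] exI[of _ 1]) (simp add: pauli_Y_def mat_of_rows_list_def)
  next
    case 4 then show ?thesis by (intro exI[of _ 0]) (simp add: pauli_Z_def mat_of_rows_list_def)
  qed
qed

lemma kron_list_nz:
  "set Ps \<subseteq> {pauli_I, pauli_X, pauli_Y, pauli_Z} \<Longrightarrow>
   \<exists>i j. i < 2^length Ps \<and> j < 2^length Ps \<and> kron_list Ps $$ (i,j) \<noteq> 0"
proof (induction Ps)
  case Nil then show ?case by (intro exI[of _ 0]) simp
next
  case (Cons P Ps)
  let ?m = "2^length Ps :: nat"
  from Cons obtain i j where ij: "i < ?m" "j < ?m" "kron_list Ps $$ (i,j) \<noteq> 0" by auto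
  from Cons have P: "P \<in> {pauli_I, pauli_X, pauli_Y, pauli_Z}" by auto
  then obtain a b where ab: "a < 2" "b < 2" "P $$ (a,b) \<noteq> 0" using paulis_nz by blast
  have Q: "kron_list Ps \<in> carrier_mat ?m ?m" using Cons kron_list_carrier by auto
  have e: "kron P (kron_list Ps) $$ (a*?m+i, b*?m+j) = P $$ (a,b) * kron_list Ps $$ (i,j)"
    using kron_index[OF paulis_carrier[OF P] Q ij(1,2) ab(1,2)] .
  have lt: "a*?m+i < 2^length (P#Ps)" "b*?m+j < 2^length (P#Ps)" using ab ij
    using lt2 by auto
  show ?case using e lt ab ij by (intro exI[of _ "a*?m+i"] exI[of _ "b*?m+j"]) simp
qed


lemma pauli_memI:
  "w \<in> {1, -1, \<i>, -\<i>} \<Longrightarrow> length Ps = n \<Longrightarrow> set Ps \<subseteq> {pauli_I, pauli_X, pauli_Y, pauli_Z}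
   \<Longrightarrow> w \<cdot>\<^sub>m kron_list Ps \<in> pauli_group n"
  unfolding pauli_group_def by (rule CollectI, rule exI[of _ w], rule exI[of _ Ps]) simp

lemma pauli_memE:
  assumes "P \<in> pauli_group n"
  obtains w Ps where "P = w \<cdot>\<^sub>m kron_list Ps" "w \<in> {1, -1, \<i>, -\<i>}" "length Ps = n"
    "set Ps \<subseteq> {pauli_I, pauli_X, pauli_Y, pauli_Z}"
  using assms unfolding pauli_group_def by (auto simp only: mem_Collect_eq)

lemma pauli_carrier: "P \<in> pauli_group n \<Longrightarrow> P \<in> carrier_mat (2^n) (2^n)"
proof -
  assume "P \<in> pauli_group n"
  then obtain w Ps where P: "P = w \<cdot>\<^sub>m kron_list Ps" "length Ps = n"
    "set Ps \<subseteq> {pauli_I, pauli_X, pauli_Y, pauli_Z}" by (rule pauli_memE) 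
  then show ?thesis using kron_list_carrier[OF P(3)] by simp
qed

lemma pauli_step:
  assumes "P \<in> pauli_group n"
  shows "kron pauli_I P \<in> pauli_group (Suc n)"
proof -
  obtain w Ps where P: "P = w \<cdot>\<^sub>m kron_list Ps" "w \<in> {1, -1, \<i>, -\<i>}" "length Ps = n"
    "set Ps \<subseteq> {pauli_I, pauli_X, pauli_Y, pauli_Z}"
    using assms by (rule pauli_memE)
  have Q: "kron_list Ps \<in> carrier_mat (2^n) (2^n)" using kron_list_carrier P by auto
  have "kron pauli_I P = fb (2^n) (w \<cdot>\<^sub>m kron_list Ps) (w \<cdot>\<^sub>m kron_list Ps)"
    using I_kron[of P "2^n"] P(1) Q by simp
  also have "\<dots> = w \<cdot>\<^sub>m fb (2^n) (kron_list Ps) (kron_list Ps)"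
    using Q by (subst smult_four_block_mat[of _ "2^n" "2^n" _ "2^n" _ "2^n"]) auto
  also have "\<dots> = w \<cdot>\<^sub>m kron_list (pauli_I # Ps)"
    using I_kron[OF Q] by simp
  moreover have "w \<cdot>\<^sub>m kron_list (pauli_I # Ps) \<in> pauli_group (Suc n)"
    using P(2-4) by (intro pauli_memI) auto
  ultimately show ?thesis by simp
qed

lemma base_case:
  assumes A: "A \<in> carrier_mat (2^n) (2^n)" and B: "B \<in> carrier_mat (2^n) (2^n)"
    and D: "fb (2^n) A B \<in> pauli_group (Suc n)"
  shows "A \<in> pauli_group n \<and> B \<in> pauli_group n"
proof -
  let ?m = "2^n :: nat"
  obtain w Ps where W: "fb ?m A B = w \<cdot>\<^sub>m kron_list Ps" "w \<in> {1, -1, \<i>, -\<i>}" "length Ps = Suc n"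
    "set Ps \<subseteq> {pauli_I, pauli_X, pauli_Y, pauli_Z}"
    using D by (rule pauli_memE)
  then obtain P Ps' where Ps: "Ps = P # Ps'" by (cases Ps) auto
  have P: "P \<in> {pauli_I, pauli_X, pauli_Y, pauli_Z}" using W Ps by auto
  have Ps': "set Ps' \<subseteq> {pauli_I, pauli_X, pauli_Y, pauli_Z}" "length Ps' = n" using W Ps by auto
  define Q where "Q = kron_list Ps'"
  have Q: "Q \<in> carrier_mat ?m ?m" using kron_list_carrier[OF Ps'(1)] Ps'(2) Q_def by simp
  have Pc: "P \<in> carrier_mat 2 2" using paulis_carrier[OF P] .
  have Deq: "fb ?m A B = w \<cdot>\<^sub>m kron P Q" using W Ps Q_def by simp
  have KC: "kron P Q \<in> carrier_mat (2*?m) (2*?m)" using kron_carrier[OF Pc Q] .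
  have ent: "fb ?m A B $$ (a*?m+i, b*?m+j) = w * (P $$ (a,b) * Q $$ (i,j))"
    if "a < 2" "b < 2" "i < ?m" "j < ?m" for a b i j
  proof -
    have "a*?m+i < 2*?m" "b*?m+j < 2*?m" using that lt2 by auto
    then show ?thesis using Deq KC kron_index[OF Pc Q that(3,4) that(1,2)] by simp
  qed
  obtain i0 j0 where ij0: "i0 < ?m" "j0 < ?m" "Q $$ (i0,j0) \<noteq> 0"
    using kron_list_nz[OF Ps'(1)] Ps'(2) Q_def by auto
  have w0: "w \<noteq> 0" using W(2) by auto
  have "fb ?m A B $$ (0*?m+i0, 1*?m+j0) = 0" using A B ij0 by simp
  then have "P $$ (0,1) = 0" using ent[of 0 1 i0 j0] ij0 w0 by simp
  then have PIZ: "P = pauli_I \<or> P = pauli_Z" using P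
    by (auto simp: pauli_X_def pauli_Y_def mat_of_rows_list_def)
  have Ablk: "A = (w * P $$ (0,0)) \<cdot>\<^sub>m Q"
  proof (rule eq_matI)
    fix i j assume "i < dim_row ((w * P $$ (0,0)) \<cdot>\<^sub>m Q)" "j < dim_col ((w * P $$ (0,0)) \<cdot>\<^sub>m Q)"
    then have ij: "i < ?m" "j < ?m" using Q by auto
    have "A $$ (i,j) = fb ?m A B $$ (0*?m+i, 0*?m+j)" using A B ij by simp
    then show "A $$ (i,j) = ((w * P $$ (0,0)) \<cdot>\<^sub>m Q) $$ (i,j)" using ent[of 0 0 i j] ij Q by simp
  qed (use A Q in auto)
  have Bblk: "B = (w * P $$ (1,1)) \<cdot>\<^sub>m Q"
  proof (rule eq_matI)
    fix i j assume "i < dim_row ((w * P $$ (1,1)) \<cdot>\<^sub>m Q)" "j < dim_col ((w * P $$ (1,1)) \<cdot>\<^sub>m Q)"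
    then have ij: "i < ?m" "j < ?m" using Q by auto
    have "B $$ (i,j) = fb ?m A B $$ (1*?m+i, 1*?m+j)" using A B ij by simp
    then show "B $$ (i,j) = ((w * P $$ (1,1)) \<cdot>\<^sub>m Q) $$ (i,j)" using ent[of 1 1 i j] ij Q by simp
  qed (use B Q in auto)
  have c0: "w * P $$ (0,0) \<in> {1, -1, \<i>, -\<i>}" "w * P $$ (1,1) \<in> {1, -1, \<i>, -\<i>}"
    using PIZ W(2) by (auto simp: pauli_I_def pauli_Z_def mat_of_rows_list_def)
  show ?thesis using Ablk Bblk c0 Ps' Q_def pauli_memI by simp
qed

lemma main_gen:
  "\<forall>A B. A \<in> carrier_mat (2^n) (2^n) \<longrightarrow> B \<in> carrier_mat (2^n) (2^n) \<longrightarrow>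
     fb (2^n) A B \<in> clifford (Suc n) (Suc k) \<longrightarrow> A \<in> clifford n (Suc k) \<and> B \<in> clifford n (Suc k)"
proof (induction k)
  case 0 then show ?case using base_case by simp
next
  case (Suc k)
  let ?m = "2^n :: nat"
  show ?case
  proof (intro allI impI)
    fix A B assume A: "A \<in> carrier_mat ?m ?m" and B: "B \<in> carrier_mat ?m ?m"
      and D: "fb ?m A B \<in> clifford (Suc n) (Suc (Suc k))"
    have aA: "adj A \<in> carrier_mat ?m ?m" "adj B \<in> carrier_mat ?m ?m" using A B adj_carrier by auto
    have U: "unitary (Suc n) (fb ?m A B)" and
      conj: "\<forall>P \<in> pauli_group (Suc n). fb ?m A B * P * adj (fb ?m A B) \<in> clifford (Suc n) (Suc k)"
      using D by auto
    have adjD: "adj (fb ?m A B) = fb ?m (adj A) (adj B)" using adj_fb[OF A B] .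
    have one: "1\<^sub>m (2^Suc n) = fb ?m (1\<^sub>m ?m) (1\<^sub>m ?m)" by (simp add: mult_2)
    have "fb ?m (A * adj A) (B * adj B) = fb ?m (1\<^sub>m ?m) (1\<^sub>m ?m)"
      using U unfolding unitary_def adjD one using fb_mult[OF A B aA] by simp
    then have u1: "A * adj A = 1\<^sub>m ?m" "B * adj B = 1\<^sub>m ?m"
      using fb_inj[of "A * adj A" ?m "B * adj B" "1\<^sub>m ?m" "1\<^sub>m ?m"] A B aA by auto
    have "fb ?m (adj A * A) (adj B * B) = fb ?m (1\<^sub>m ?m) (1\<^sub>m ?m)"
      using U unfolding unitary_def adjD one using fb_mult[OF aA A B] by simp
    then have u2: "adj A * A = 1\<^sub>m ?m" "adj B * B = 1\<^sub>m ?m"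
      using fb_inj[of "adj A * A" ?m "adj B * B" "1\<^sub>m ?m" "1\<^sub>m ?m"] A B aA by auto
    have UA: "unitary n A" "unitary n B" using u1 u2 A B unfolding unitary_def by auto
    have rest: "A * P * adj A \<in> clifford n (Suc k) \<and> B * P * adj B \<in> clifford n (Suc k)"
      if P: "P \<in> pauli_group n" for P
    proof -
      have Pc: "P \<in> carrier_mat ?m ?m" using pauli_carrier[OF P] .
      have "kron pauli_I P \<in> pauli_group (Suc n)" using pauli_step[OF P] .
      then have "fb ?m A B * fb ?m P P * adj (fb ?m A B) \<in> clifford (Suc n) (Suc k)"
        using conj I_kron[OF Pc] by simp
      moreover have "fb ?m A B * fb ?m P P * adj (fb ?m A B) = fb ?m (A * P * adj A) (B * P * adj B)"
        unfolding adjD using fb_mult[OF A B Pc Pc] fb_mult[of "A*P" ?m "B*P" "adj A" "adj B"] A B Pc aA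
        by simp
      ultimately have "fb ?m (A * P * adj A) (B * P * adj B) \<in> clifford (Suc n) (Suc k)" by simp
      moreover have "A * P * adj A \<in> carrier_mat ?m ?m" "B * P * adj B \<in> carrier_mat ?m ?m"
        using A B Pc aA by auto
      ultimately show ?thesis using Suc.IH by blast
    qed
    show "A \<in> clifford n (Suc (Suc k)) \<and> B \<in> clifford n (Suc (Suc k))"
      using UA rest by auto
  qed
qed

theorem mainTheorem1:
  fixes n r :: nat and A B :: "complex mat"
  assumes "n \<ge> 1" and "r \<ge> 1"
    and "unitary n A" and "unitary n B"
    and "kron proj0 A + kron proj1 B \<in> clifford (n + 1) r"
  shows "A \<in> clifford n r \<and> B \<in> clifford n r"
proof -
  obtain k where r: "r = Suc k" using assms(2) by (cases r) auto
  have A: "A \<in> carrier_mat (2^n) (2^n)" and B: "B \<in> carrier_mat (2^n) (2^n)"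
    using assms(3,4) unfolding unitary_def by auto
  have "fb (2^n) A B \<in> clifford (Suc n) (Suc k)"
    using assms(5) D_eq[OF A B] r by simp
  then show ?thesis using main_gen[of n k] A B r by blast
qed

end
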